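(* Let $q$ be even and $\mu\in\mathbb F_q^*\setminus\{1\}$. Then $N_1(\mu)=\#\{\gamma\in\mathbb F_q^*:\mathrm{Tr}_2(\delta_{\mu,\gamma})=1\}$ and $\widetilde N_1(\mu)=\#\{c\in\mathbb F_q^*:\mathrm{Tr}_2(\widetilde\delta_{\mu,c})=1\}$, where $\delta_{\mu,\gamma}=\dfrac{\mu^3+\gamma^4}{\gamma^2(\mu+1)^2}+\dfrac1{\mu+1}$ and $\widetilde\delta_{\mu,c}=\dfrac{1+\mu c^4}{c^2(\mu+1)^2}+\dfrac{\mu}{\mu+1}$.
   Context: $\mathrm{Tr}_2$ denotes the absolute trace $\mathbb F_q\to\mathbb F_2$. $N_1(\mu)$ is the number of $\gamma\in\mathbb F_q$ such that $t^3+\gamma t^2+\mu t+\gamma=0$ has exactly one solution $t\in\mathbb F_q$; $\widetilde N_1(\mu)$ is the number of $c\in\mathbb F_q^*$ such that $t^3+ct^2+t+\mu c=0$ has exactly one solution $t\in\mathbb F_q$. *)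

theory Defs
  imports Main "HOL-Library.Cardinality"
begin

text \<open>For q = 2^m the absolute trace Tr_2 : F_q -> F_2 is
  x + x^2 + x^4 + ... + x^(2^(m-1)); its value lies in the prime field {0,1}
  of F_q, so we return it as an element of 'a.\<close>

definition abs_trace2 :: "'a::{finite,field} \<Rightarrow> 'a" where
  "abs_trace2 x = (\<Sum>i<(THE m. CARD('a) = 2 ^ m). x ^ (2 ^ i))"

definition N1 :: "'a::{finite,field} \<Rightarrow> nat" where
  "N1 \<mu> = card {\<gamma>::'a. card {t::'a. t^3 + \<gamma> * t^2 + \<mu> * t + \<gamma> = 0} = 1}"

definition N1_tilde :: "'a::{finite,field} \<Rightarrow> nat" where
  "N1_tilde \<mu> = card {c::'a. c \<noteq> 0 \<and> card {t::'a. t^3 + c * t^2 + t + \<mu> * c = 0} = 1}"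

end

theory Submission
  imports Defs "HOL-Computational_Algebra.Polynomial"
begin


lemma even_card_negclosed:
  fixes A :: "'a::ab_group_add set"
  assumes "finite A" "\<forall>x\<in>A. -x \<in> A \<and> -x \<noteq> x"
  shows "even (card A)"
using assms proof (induction "card A" arbitrary: A rule: less_induct)
  case less
  show ?case
  proof (cases "A = {}")
    case True then show ?thesis by simp
  next
    case False
    then obtain x where x: "x \<in> A" by blast
    define B where "B = A - {x, -x}"
    have sub: "{x, -x} \<subseteq> A" using x less.prems by auto
    have c2: "card {x, -x} = 2" using x less.prems by auto
    have cB: "card B = card A - 2" unfolding B_def
      using card_Diff_subset[OF _ sub] c2 by auto
    have ge: "card A \<ge> 2" using card_mono[OF less.prems(1) sub] c2 by simp
    have "even (card B)"
    proof (rule less.hyps)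
      show "card B < card A" using cB ge by simp
      show "finite B" using less.prems unfolding B_def by simp
      show "\<forall>y\<in>B. - y \<in> B \<and> - y \<noteq> y" using less.prems unfolding B_def
        by (auto simp: minus_equation_iff)
    qed
    then show ?thesis using cB ge by presburger
  qed
qed

lemma char2_of_even:
  assumes "even CARD('a::{finite,field})" shows "(2::'a) = 0"
proof (rule ccontr)
  assume h: "(2::'a) \<noteq> 0"
  have "even (card (UNIV - {0::'a}))"
  proof (rule even_card_negclosed)
    show "\<forall>x\<in>UNIV - {0::'a}. - x \<in> UNIV - {0} \<and> - x \<noteq> x"
    proof
      fix x :: 'a assume "x \<in> UNIV - {0}"
      then have "x \<noteq> 0" by simp
      moreover have "-x = x \<Longrightarrow> 2 * x = 0" by (metis add_eq_0_iff2 mult_2)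
      ultimately show "- x \<in> UNIV - {0} \<and> - x \<noteq> x" using h by auto
    qed
  qed simp
  moreover have "card (UNIV - {0::'a}) = CARD('a) - 1" by (simp add: card_Diff_singleton)
  moreover have "CARD('a) \<ge> 1" using finite_UNIV_card_ge_0[where ?'a='a] by simp
  ultimately show False using assms by presburger
qed

definition addsub :: "'a::ab_group_add set \<Rightarrow> bool" where
  "addsub V \<longleftrightarrow> 0 \<in> V \<and> (\<forall>x\<in>V. \<forall>y\<in>V. x + y \<in> V)"

lemma pow2_card:
  assumes ch: "(2::'a::{finite,field}) = 0" shows "\<exists>m. CARD('a) = 2^m"
proof -
  have xx: "x + x = (0::'a)" for x by (metis ch mult_2 mult_zero_left)
  have "\<exists>V::'a set. addsub V \<and> (\<exists>j. card V = 2^j) \<and> min k CARD('a) \<le> card V" for k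
  proof (induction k)
    case 0
    show ?case by (rule exI[of _ "{0}"]) (auto simp: addsub_def intro: exI[of _ 0])
  next
    case (Suc k)
    then obtain V :: "'a set" and j where V: "addsub V" "card V = 2^j" "min k CARD('a) \<le> card V"
      by blast
    show ?case
    proof (cases "min (Suc k) CARD('a) \<le> card V")
      case True then show ?thesis using V by blast
    next
      case False
      then have "card V < CARD('a)" by simp
      then have "V \<noteq> UNIV" by auto
      then obtain x where x: "x \<notin> V" by blast
      define W where "W = V \<union> (\<lambda>v. x + v) ` V"
      have disj: "V \<inter> (\<lambda>v. x + v) ` V = {}"
      proof (rule ccontr)
        assume "V \<inter> (\<lambda>v. x + v) ` V \<noteq> {}"
        then obtain v where v: "v \<in> V" "x + v \<in> V" by blast
        then have "(x + v) + v \<in> V" using V(1) unfolding addsub_def by blast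
        moreover have "(x + v) + v = x" by (simp add: add.assoc xx)
        ultimately show False using x by simp
      qed
      have cW: "card W = 2 * card V"
        unfolding W_def
        by (subst card_Un_disjoint) (auto simp: disj card_image inj_on_def)
      have aW: "addsub W"
        unfolding addsub_def W_def
      proof (intro conjI ballI)
        show "0 \<in> V \<union> (+) x ` V" using V(1) unfolding addsub_def by blast
      next
        fix a b assume a: "a \<in> V \<union> (+) x ` V" and b: "b \<in> V \<union> (+) x ` V"
        have cl: "\<And>u w. u \<in> V \<Longrightarrow> w \<in> V \<Longrightarrow> u + w \<in> V" using V(1) unfolding addsub_def by blast
        have e1: "\<And>u w. u + (x + w) = x + (u + w)" by (simp add: add_ac)
        have e2: "\<And>u w. (x + u) + (x + w) = u + w"
          by (metis add.assoc add.commute add_0 xx)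
        from a b show "a + b \<in> V \<union> (+) x ` V"
          by (auto simp: e1 e2 cl ch add.assoc[symmetric] intro!: imageI)
      qed
      have "card V \<ge> 1" using V(1) unfolding addsub_def
        by (metis One_nat_def Suc_leI card_gt_0_iff empty_iff finite)
      moreover have "k \<le> card V" using V(3) \<open>card V < CARD('a)\<close> by linarith
      ultimately have "min (Suc k) CARD('a) \<le> card W" using cW by linarith
      moreover have "card W = 2 ^ Suc j" using cW V(2) by simp
      ultimately show ?thesis using aW by blast
    qed
  qed
  then obtain V :: "'a set" and j where V: "card V = 2^j" "CARD('a) \<le> card V"
    by (metis min.idem)
  then have "V = UNIV" by (metis card_seteq finite top_greatest)
  then show ?thesis using V by blast
qed



definition tr :: "nat \<Rightarrow> 'b::field \<Rightarrow> 'b" where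
  "tr n x = (\<Sum>i<n. x^(2^i))"

lemma fermat_ff:
  fixes x :: "'a :: {finite,field}"
  shows   "x ^ CARD('a) = x"
proof (cases "x = 0")
  case False
  have "x * (\<Prod>y\<in>UNIV-{0}. x * y) = x * x ^ (card (UNIV :: 'a set) - 1) * \<Prod>(UNIV-{0})"
    by (simp add: prod.distrib mult_ac)
  also have "x * x ^ (card (UNIV :: 'a set) - 1) = x ^ Suc (card (UNIV :: 'a set) - 1)"
    by (subst power_Suc) auto
  also have "Suc (card (UNIV :: 'a set) - 1) = card (UNIV :: 'a set)"
    using finite_UNIV_card_ge_0[where ?'a = 'a] by simp
  also have "(\<Prod>y\<in>UNIV-{0}. x * y) = (\<Prod>y\<in>UNIV-{0}. y)"
    by (rule prod.reindex_bij_witness[of _ "\<lambda>y. y / x" "\<lambda>y. x * y"]) (use False in auto)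
  finally show ?thesis
    by simp
qed (use finite_UNIV_card_ge_0[where ?'a = 'a] in auto)

lemma card_shift:
  fixes c :: "'b::ab_group_add"
  shows "card {t. P t} = card {s. P (s + c)}"
proof -
  have "bij_betw (\<lambda>s. s + c) {s. P (s + c)} {t. P t}"
    by (rule bij_betw_byWitness[where f'="\<lambda>t. t - c"]) auto
  then show ?thesis by (simp add: bij_betw_same_card)
qed

context
  fixes m :: nat
  assumes cardm: "CARD('a::{finite,field}) = 2 ^ m"
  and ch2: "(2::'a) = 0"
begin

lemma xx[simp]: "x + x = (0::'a)" by (metis ch2 mult_2 mult_zero_left)
lemma xxy[simp]: "x + (x + y) = (y::'a)" by (simp add: add.assoc[symmetric])
lemma negc2[simp]: "-x = (x::'a)" by (metis add_eq_0_iff2 xx)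
lemma diffc2[simp]: "x - y = x + (y::'a)" by (metis diff_conv_add_uminus negc2)
lemma num0[simp]: "(numeral (Num.Bit0 n) :: 'a) = 0" by (simp only: numeral_Bit0 xx)
lemma num1[simp]: "(numeral (Num.Bit1 n) :: 'a) = 1" by (simp only: numeral_Bit1 xx add_0)

lemma frob: "(x + y)^2 = x^2 + (y::'a)^2"
  by (simp add: power2_eq_square algebra_simps)

lemma frob_pow: "(x + y)^(2^i) = x^(2^i) + (y::'a)^(2^i)"
proof (induction i)
  case (Suc i)
  have "(x + y)^(2^Suc i) = ((x + y)^(2^i))^2" by (simp add: power_mult[symmetric] mult.commute)
  also have "\<dots> = (x^(2^i))^2 + (y^(2^i))^2" using Suc by (simp add: frob)
  finally show ?case by (simp add: power_mult[symmetric] mult.commute)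
qed simp

lemma frob_sum: "finite A \<Longrightarrow> (\<Sum>i\<in>A. f i)^2 = (\<Sum>i\<in>A. (f i :: 'a)^2)"
  by (induction A rule: finite_induct) (simp_all add: frob)

lemma fermat2: "x^(2^m) = (x::'a)"
  using fermat_ff[of x] cardm by simp

lemma m_pos: "m > 0"
proof -
  have "card {0::'a, 1} \<le> CARD('a)" by (rule card_mono) auto
  then have "CARD('a) \<ge> 2" by simp
  then show ?thesis using cardm by (cases m) auto
qed

abbreviation T :: "'a \<Rightarrow> 'a" where "T \<equiv> tr m"

lemma tr_add: "T (x + y) = T x + T y"
  by (simp add: tr_def frob_pow sum.distrib)

lemma tr_zero[simp]: "T 0 = 0"
  by (simp add: tr_def zero_power)

lemma tr_sq: "T (x^2) = T x"
proof -
  have "T (x^2) = (\<Sum>i<m. x^(2^Suc i))"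
    unfolding tr_def by (simp add: power_mult[symmetric] mult.commute)
  also have "\<dots> + x = (\<Sum>i<Suc m. x^(2^i))"
    by (subst sum.lessThan_Suc_shift) simp
  also have "\<dots> = T x + x" by (simp add: tr_def fermat2)
  finally show ?thesis by simp
qed

lemma tr_idem: "(T x)^2 = T x"
proof -
  have "(T x)^2 = (\<Sum>i<m. (x^(2^i))^2)" unfolding tr_def by (simp add: frob_sum)
  also have "\<dots> = T (x^2)" unfolding tr_def by (simp add: power_mult[symmetric] mult.commute)
  finally show ?thesis by (simp add: tr_sq)
qed

lemma tr01: "T x = 0 \<or> T x = 1"
proof -
  have h: "T x * T x = T x * 1" using tr_idem[of x] by (simp add: power2_eq_square)
  show ?thesis
  proof (cases "T x = 0")
    case False then show ?thesis using h mult_left_cancel by blast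
  qed simp
qed

lemma tr_L: "T (z^2 + z) = 0"
  by (simp add: tr_add tr_sq)

lemma tr_key:
  assumes "a \<noteq> 1" shows "T (a^3 / (1 + a)^2) = T a"
proof -
  define b where "b = 1 + a"
  have b0: "b \<noteq> 0" using assms unfolding b_def
    by (metis add.commute negc2 neg_eq_iff_add_eq_0)
  have ab: "a = b + 1" unfolding b_def by (simp add: add.commute)
  have "a^3 / (1 + a)^2 = b + 1 + (1/b + (1/b)^2)"
    unfolding ab using b0 by (simp add: field_simps power2_eq_square power3_eq_cube algebra_simps)
  then have "T (a^3 / (1 + a)^2) = T b + T 1" by (simp add: tr_add tr_sq)
  then show ?thesis by (simp add: ab tr_add)
qed


lemma eq_iff_sum0: "u = v \<longleftrightarrow> u + v = (0::'a)"
  by (metis add_eq_0_iff2 negc2)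

lemma tr_poly_card: "card {x::'a. T x = 0} \<le> 2^(m-1)"
proof -
  define P :: "'a poly" where "P = (\<Sum>i<m. monom 1 (2^i))"
  have ev: "poly P x = T x" for x unfolding P_def tr_def by (simp add: poly_sum poly_monom)
  have deg: "degree P \<le> 2^(m-1)" unfolding P_def
  proof (rule degree_sum_le)
    fix i assume "i \<in> {..<m}"
    then have "i \<le> m - 1" by auto
    then have "(2::nat)^i \<le> 2^(m-1)" by (rule power_increasing) simp
    then show "degree (monom (1::'a) (2^i)) \<le> 2^(m-1)" using degree_monom_le order_trans by blast
  qed simp
  have "coeff P (2^(m-1)) = (\<Sum>i<m. if i = m - 1 then 1 else 0)"
    unfolding P_def coeff_sum by (simp add: coeff_monom)
  also have "\<dots> = 1" using m_pos by simp
  finally have "P \<noteq> 0" by auto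
  then have "card {x. poly P x = 0} \<le> degree P" by (rule card_poly_roots_bound)
  then show ?thesis using deg ev by simp
qed

lemma AS: assumes "T b = 0" shows "\<exists>z. z^2 + z = b"
proof -
  define L where "L = (\<lambda>z::'a. z^2 + z)"
  have fib: "L -` {L z} = {z, z+1}" for z
  proof -
    have "L y = L z \<longleftrightarrow> y = z \<or> y = z + 1" for y
    proof -
      have h1: "L y + L z = (y+z)*(y+z+1)" by (simp add: L_def algebra_simps power2_eq_square)
      then have "L y = L z \<longleftrightarrow> (y+z)*(y+z+1) = 0" by (metis eq_iff_sum0)
      also have "\<dots> \<longleftrightarrow> y + z = 0 \<or> y + z + 1 = 0" by (simp only: mult_eq_0_iff)
      also have "\<dots> \<longleftrightarrow> y = z \<or> y = z + 1" by (metis eq_iff_sum0 add.assoc)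
      finally show ?thesis .
    qed
    then show ?thesis by auto
  qed
  have c2: "card (L -` {y}) = 2" if "y \<in> L ` UNIV" for y
    using that fib by auto
  have "UNIV = (\<Union>y\<in>L ` UNIV. L -` {y})" by auto
  then have "CARD('a) = card (\<Union>y\<in>L ` UNIV. L -` {y})" by simp
  also have "\<dots> = (\<Sum>y\<in>L ` UNIV. card (L -` {y}))"
    by (rule card_UN_disjoint) auto
  also have "\<dots> = 2 * card (L ` UNIV)" using c2 by simp
  finally have cL: "card (L ` UNIV) = 2^(m-1)" using cardm m_pos
    by (metis Suc_diff_1 mult_left_cancel power_Suc zero_neq_numeral)
  have sub: "L ` UNIV \<subseteq> {x. T x = 0}" unfolding L_def using tr_L by auto
  have "L ` UNIV = {x. T x = 0}"
  proof (rule card_subset_eq)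
    have "card (L ` UNIV) \<le> card {x. T x = 0}" by (rule card_mono) (simp_all add: sub)
    then show "card (L ` UNIV) = card {x. T x = 0}" using cL tr_poly_card by linarith
  qed (simp_all add: sub)
  then have "b \<in> L ` UNIV" using assms by simp
  then obtain z where "b = L z" by blast
  then show ?thesis unfolding L_def by blast
qed

lemma AS_iff: "(\<exists>z. z^2 + z = b) \<longleftrightarrow> T b = 0"
  using AS tr_L by blast

lemma tr_phi:
  assumes "s \<noteq> 0" "s^2 \<noteq> p"
  shows "T (p^3 / (s^3 + p*s)^2) = T (p / s^2)"
proof -
  define a where "a = p / s^2"
  have pa: "p = a * s^2" unfolding a_def using assms by simp
  have a1: "a \<noteq> 1" using assms pa by auto
  have a1': "1 + a \<noteq> 0" using a1 by (metis add.commute add_cancel_right_left eq_iff_sum0)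
  have e: "s^3 + p*s = s^3 * (1 + a)"
    unfolding pa by (simp add: algebra_simps power2_eq_square power3_eq_cube)
  have e2: "(s^3 + p*s)^2 = s^6 * (1 + a)^2" unfolding e by (simp add: power_mult_distrib power_mult[symmetric])
  have e3: "p^3 = a^3 * s^6" unfolding pa by (simp add: power_mult_distrib power_mult[symmetric])
  have "p^3 / (s^3 + p*s)^2 = a^3 / (1 + a)^2"
    unfolding e2 e3 using assms(1) a1' by simp
  then show ?thesis using tr_key[OF a1] a_def by simp
qed


lemma root_analysis:
  assumes r: "s0^3 + p*s0 = r" and r0: "r \<noteq> 0"
  shows "card {s. s^3 + p*s + r = 0} = 1 \<longleftrightarrow> T (p^3/r^2) \<noteq> T 1"
proof -
  have s0: "s0 \<noteq> 0" using r r0 by auto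
  have sp: "s0^2 \<noteq> p" using r r0 by (auto simp: power2_eq_square power3_eq_cube)
  define a where "a = p / s0^2"
  have pa: "p = a * s0^2" unfolding a_def using s0 by simp
  define Q where "Q = (\<lambda>s. s^2 + s0*s + s0^2 + p)"
  have fac: "s^3 + p*s + r = (s + s0) * Q s" for s
    unfolding Q_def r[symmetric] by (simp add: algebra_simps power2_eq_square power3_eq_cube)
  have "s0^2 + p \<noteq> 0" using sp eq_iff_sum0[of "s0^2" p] by blast
  then have Qs0: "Q s0 \<noteq> 0" unfolding Q_def by (simp add: power2_eq_square)
  have roots: "{s. s^3 + p*s + r = 0} = insert s0 {s. Q s = 0}"
    by (auto simp: fac eq_iff_sum0[of _ s0])
  have fin: "finite {s. Q s = 0}" by simp
  have s0n: "s0 \<notin> {s. Q s = 0}" using Qs0 by simp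
  have "card {s. s^3 + p*s + r = 0} = 1 \<longleftrightarrow> {s. Q s = 0} = {}"
    unfolding roots using fin s0n by (simp add: card_insert_if)
  also have "\<dots> \<longleftrightarrow> \<not> (\<exists>y. y^2 + y = 1 + a)"
  proof -
    have q: "Q s = s0^2 * ((s/s0)^2 + s/s0 + (1 + a))" for s
      unfolding Q_def pa using s0 by (simp add: field_simps power2_eq_square)
    have q2: "Q s = 0 \<longleftrightarrow> (s/s0)^2 + s/s0 = 1 + a" for s
    proof -
      have "Q s = 0 \<longleftrightarrow> (s/s0)^2 + s/s0 + (1 + a) = 0" using q s0 by simp
      also have "\<dots> \<longleftrightarrow> (s/s0)^2 + s/s0 = 1 + a"
        using eq_iff_sum0[of "(s/s0)^2 + s/s0" "1 + a"] by simp
      finally show ?thesis .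
    qed
    show ?thesis
    proof
      assume "{s. Q s = 0} = {}"
      then show "\<not> (\<exists>y. y^2 + y = 1 + a)" using q2[of "s0 * _"] s0 by auto
    next
      assume "\<not> (\<exists>y. y^2 + y = 1 + a)"
      then show "{s. Q s = 0} = {}" using q2 by auto
    qed
  qed
  also have "\<dots> \<longleftrightarrow> T (1 + a) \<noteq> 0" by (simp add: AS_iff)
  also have "\<dots> \<longleftrightarrow> T a \<noteq> T 1" by (simp add: tr_add eq_iff_sum0[of "T a"] add.commute)
  also have "T a = T (p^3/r^2)" using tr_phi[OF s0 sp] r a_def by simp
  finally show ?thesis .
qed

lemma perm_count:
  assumes "finite A" "inj_on g A" "g ` A \<subseteq> A"
  shows "card {x\<in>A. P (g x)} = card {y\<in>A. P y}"
proof -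
  have gA: "g ` A = A" using endo_inj_surj assms by blast
  have "card {x\<in>A. P (g x)} = card (g ` {x\<in>A. P (g x)})"
    by (rule card_image[symmetric]) (rule inj_on_subset[OF assms(2)], auto)
  also have "g ` {x\<in>A. P (g x)} = {y\<in>A. P y}" using gA by auto
  finally show ?thesis .
qed

lemma sq_inj: "x^2 = y^2 \<Longrightarrow> x = (y::'a)"
proof -
  assume "x^2 = y^2"
  then have "(x + y)^2 = 0" by (simp add: frob eq_iff_sum0[of "x^2"])
  then show ?thesis by (simp add: eq_iff_sum0[of x])
qed

lemma count_eq:
  "card {s. s^3 + p*s \<noteq> 0 \<and> T (p^3/(s^3 + p*s)^2) \<noteq> T 1}
   = card {r. r \<noteq> 0 \<and> T (p^3/r^2) \<noteq> T 1}"
proof (cases "p = 0")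
  case True
  then show ?thesis by simp
next
  case False
  define K where "K = {y::'a. y \<noteq> 0 \<and> T y \<noteq> T 1}"
  have A: "card {r. r \<noteq> 0 \<and> T (p^3/r^2) \<noteq> T 1} = card K"
  proof -
    have "card {r \<in> UNIV - {0}. (\<lambda>y. T y \<noteq> T 1) (p^3/r^2)} = card {y \<in> UNIV - {0}. (\<lambda>y. T y \<noteq> T 1) y}"
    proof (rule perm_count)
      show "inj_on (\<lambda>r. p ^ 3 / r\<^sup>2) (UNIV - {0})"
        using False by (auto simp: inj_on_def intro: sq_inj)
      show "(\<lambda>r. p ^ 3 / r\<^sup>2) ` (UNIV - {0}) \<subseteq> UNIV - {0}" using False by auto
    qed simp
    then show ?thesis unfolding K_def by (simp add: conj_commute)
  qed
  have B: "card {s. s^3 + p*s \<noteq> 0 \<and> T (p^3/(s^3 + p*s)^2) \<noteq> T 1} = card K"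
  proof -
    have nz: "s^3 + p*s \<noteq> 0 \<longleftrightarrow> s \<noteq> 0 \<and> p / s^2 \<noteq> 1" for s
    proof -
      have "s^3 + p*s = s * (s^2 + p)" by (simp add: algebra_simps power2_eq_square power3_eq_cube)
      moreover have "(s^2 + p = 0) = (p / s^2 = 1)" if "s \<noteq> 0"
      proof -
        have "(s^2 + p = 0) = (p = s^2)" using eq_iff_sum0[of p "s^2"] by (simp add: add.commute)
        also have "\<dots> = (p / s^2 = 1)" using that by (simp add: divide_eq_1_iff)
        finally show ?thesis .
      qed
      ultimately show ?thesis by auto
    qed
    have "{s. s^3 + p*s \<noteq> 0 \<and> T (p^3/(s^3 + p*s)^2) \<noteq> T 1}
        = {s \<in> UNIV - {0}. (\<lambda>y. y \<noteq> 1 \<and> T y \<noteq> T 1) (p / s^2)}"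
    proof (intro set_eqI iffI)
      fix s assume "s \<in> {s. s^3 + p*s \<noteq> 0 \<and> T (p^3/(s^3 + p*s)^2) \<noteq> T 1}"
      then show "s \<in> {s \<in> UNIV - {0}. (\<lambda>y. y \<noteq> 1 \<and> T y \<noteq> T 1) (p / s^2)}"
        using nz[of s] tr_phi[of s p] by auto
    next
      fix s assume "s \<in> {s \<in> UNIV - {0}. (\<lambda>y. y \<noteq> 1 \<and> T y \<noteq> T 1) (p / s^2)}"
      then show "s \<in> {s. s^3 + p*s \<noteq> 0 \<and> T (p^3/(s^3 + p*s)^2) \<noteq> T 1}"
        using nz[of s] tr_phi[of s p] by auto
    qed
    also have "card \<dots> = card {y \<in> UNIV - {0}. (\<lambda>y. y \<noteq> 1 \<and> T y \<noteq> T 1) y}"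
    proof (rule perm_count)
      show "inj_on (\<lambda>s. p / s\<^sup>2) (UNIV - {0})"
        using False by (auto simp: inj_on_def intro: sq_inj)
      show "(\<lambda>s. p / s\<^sup>2) ` (UNIV - {0}) \<subseteq> UNIV - {0}" using False by auto
    qed simp
    also have "{y \<in> UNIV - {0}. (\<lambda>y. y \<noteq> 1 \<and> T y \<noteq> T 1) y} = K"
      unfolding K_def by auto
    finally show ?thesis .
  qed
  show ?thesis using A B by simp
qed

lemma cubic:
  assumes r0: "r \<noteq> 0"
  shows "card {s. s^3 + p*s + r = 0} = 1 \<longleftrightarrow> T (p^3/r^2) \<noteq> T 1"
proof (cases "\<exists>s0. s0^3 + p*s0 = r")
  case True
  then show ?thesis using root_analysis r0 by blast
next
  case False
  have ne: "s^3 + p*s + r \<noteq> 0" for s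
  proof
    assume "s^3 + p*s + r = 0"
    then have "s^3 + p*s = r" using eq_iff_sum0[of "s^3+p*s" r] by simp
    with False show False by blast
  qed
  have e: "{s. s^3 + p*s + r = 0} = {}" using ne by blast
  have "T (p^3/r^2) = T 1"
  proof (rule ccontr)
    assume nr: "T (p^3/r^2) \<noteq> T 1"
    define \<phi> where "\<phi> = (\<lambda>s::'a. s^3 + p*s)"
    define S1 where "S1 = {s. s^3 + p*s \<noteq> 0 \<and> T (p^3/(s^3 + p*s)^2) \<noteq> T 1}"
    define G where "G = {r. r \<noteq> 0 \<and> T (p^3/r^2) \<noteq> T 1}"
    have inj: "inj_on \<phi> S1"
    proof (rule inj_onI)
      fix s s' assume s: "s \<in> S1" and s': "s' \<in> S1" and eq: "\<phi> s = \<phi> s'"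
      have c1: "card {t. t^3 + p*t + \<phi> s = 0} = 1"
        using root_analysis[of s p "\<phi> s"] s unfolding S1_def \<phi>_def by auto
      have "s \<in> {t. t^3 + p*t + \<phi> s = 0}" unfolding \<phi>_def by simp
      moreover have "s' \<in> {t. t^3 + p*t + \<phi> s = 0}" unfolding eq unfolding \<phi>_def by simp
      moreover obtain x where "{t. t^3 + p*t + \<phi> s = 0} = {x}" using c1 by (rule card_1_singletonE)
      ultimately show "s = s'" by auto
    qed
    have sub: "\<phi> ` S1 \<subseteq> G" unfolding S1_def G_def \<phi>_def by auto
    have "card (\<phi> ` S1) = card G" using card_image[OF inj] count_eq[of p] unfolding S1_def G_def by simp
    then have "\<phi> ` S1 = G" using sub by (intro card_subset_eq) auto
    moreover have "r \<in> G" using r0 nr unfolding G_def by simp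
    ultimately obtain s where "\<phi> s = r" by blast
    then show False using False unfolding \<phi>_def by blast
  qed
  then show ?thesis using e by simp
qed


lemma abs_tr: "abs_trace2 x = T x"
proof -
  have "(THE k. CARD('a) = 2 ^ k) = m"
    by (rule the_equality) (use cardm in \<open>simp_all add: power_inject_exp\<close>)
  then show ?thesis unfolding abs_trace2_def tr_def by simp
qed

lemma count1:
  assumes r0: "r \<noteq> 0" and d: "d = p^3/r^2 + (X + X^2) + (Y + Y^2) + 1"
  shows "card {s. s^3 + p*s + r = 0} = 1 \<longleftrightarrow> T d = 1"
proof -
  have Td: "T d = T (p^3/r^2) + T 1" unfolding d by (simp add: tr_add tr_sq)
  have "card {s. s^3 + p*s + r = 0} = 1 \<longleftrightarrow> T (p^3/r^2) \<noteq> T 1" by (rule cubic[OF r0])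
  also have "\<dots> \<longleftrightarrow> T d = 1" unfolding Td using tr01[of "p^3/r^2"] tr01[of 1] by auto
  finally show ?thesis .
qed

lemma main_ctx:
  assumes mu0: "\<mu> \<noteq> 0" and mu1: "\<mu> \<noteq> (1::'a)"
  shows "N1 \<mu> = card {\<gamma>::'a. \<gamma> \<noteq> 0 \<and>
            abs_trace2 ((\<mu>^3 + \<gamma>^4) / (\<gamma>^2 * (\<mu> + 1)^2) + 1 / (\<mu> + 1)) = 1} \<and>
         N1_tilde \<mu> = card {c::'a. c \<noteq> 0 \<and>
            abs_trace2 ((1 + \<mu> * c^4) / (c^2 * (\<mu> + 1)^2) + \<mu> / (\<mu> + 1)) = 1}"
proof
  have m1: "\<mu> + 1 \<noteq> 0" using mu1 eq_iff_sum0[of \<mu> 1] by simp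
  show "N1 \<mu> = card {\<gamma>::'a. \<gamma> \<noteq> 0 \<and>
            abs_trace2 ((\<mu>^3 + \<gamma>^4) / (\<gamma>^2 * (\<mu> + 1)^2) + 1 / (\<mu> + 1)) = 1}"
    unfolding N1_def
  proof (rule arg_cong[where f=card], rule set_eqI, simp only: mem_Collect_eq)
    fix g :: 'a
    show "card {t. t^3 + g * t^2 + \<mu> * t + g = 0} = 1 \<longleftrightarrow>
      g \<noteq> 0 \<and> abs_trace2 ((\<mu>^3 + g^4) / (g^2 * (\<mu> + 1)^2) + 1 / (\<mu> + 1)) = 1"
    proof (cases "g = 0")
      case True
      have inj: "inj (\<lambda>x::'a. x^2)" by (rule inj_onI) (rule sq_inj)
      have "range (\<lambda>x::'a. x^2) = UNIV" by (rule endo_inj_surj) (simp_all add: inj)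
      then have "\<mu> \<in> range (\<lambda>x::'a. x^2)" by simp
      then obtain w where w: "w^2 = \<mu>" by blast
      have w0: "w \<noteq> 0" using w mu0 by auto
      have "{0, w} \<subseteq> {t. t^3 + g * t^2 + \<mu> * t + g = 0}"
        using True w by (auto simp: power2_eq_square power3_eq_cube)
      then have "card {0, w} \<le> card {t. t^3 + g * t^2 + \<mu> * t + g = 0}"
        by (rule card_mono[rotated]) simp
      then have "card {t. t^3 + g * t^2 + \<mu> * t + g = 0} \<noteq> 1" using w0 by auto
      then show ?thesis using True by simp
    next
      case False
      define p where "p = g^2 + \<mu>"
      define r where "r = g * (\<mu> + 1)"
      have r0: "r \<noteq> 0" using False m1 unfolding r_def by simp
      have sh: "(s + g)^3 + g * (s + g)^2 + \<mu> * (s + g) + g = s^3 + p*s + r" for s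
        unfolding p_def r_def by (simp add: algebra_simps power2_eq_square power3_eq_cube)
      have "card {t. t^3 + g * t^2 + \<mu> * t + g = 0} = card {s. (s + g)^3 + g * (s + g)^2 + \<mu> * (s + g) + g = 0}"
        by (rule card_shift)
      also have "\<dots> = card {s. s^3 + p*s + r = 0}" by (simp only: sh)
      finally have cs: "card {t. t^3 + g * t^2 + \<mu> * t + g = 0} = card {s. s^3 + p*s + r = 0}" .
      have d: "(\<mu>^3 + g^4) / (g^2 * (\<mu> + 1)^2) + 1 / (\<mu> + 1) =
        p^3/r^2 + (g^2/(\<mu>+1) + (g^2/(\<mu>+1))^2) + (\<mu>/(\<mu>+1) + (\<mu>/(\<mu>+1))^2) + 1"
      proof -
        have D: "\<mu> = (\<mu> + 1) + 1" by (simp add: add.assoc)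
        obtain D where DD: "\<mu> = D + 1" and D0: "D \<noteq> 0" using D m1 by blast
        show ?thesis
          unfolding p_def r_def DD using False D0
          by (simp add: field_simps power2_eq_square power3_eq_cube power4_eq_xxxx)
      qed
      show ?thesis using count1[OF r0 d] cs False abs_tr by simp
    qed
  qed
next
  have m1: "\<mu> + 1 \<noteq> 0" using mu1 eq_iff_sum0[of \<mu> 1] by simp
  show "N1_tilde \<mu> = card {c::'a. c \<noteq> 0 \<and>
            abs_trace2 ((1 + \<mu> * c^4) / (c^2 * (\<mu> + 1)^2) + \<mu> / (\<mu> + 1)) = 1}"
    unfolding N1_tilde_def
  proof (rule arg_cong[where f=card], rule set_eqI, simp only: mem_Collect_eq)
    fix c :: 'a
    show "c \<noteq> 0 \<and> card {t. t^3 + c * t^2 + t + \<mu> * c = 0} = 1 \<longleftrightarrow>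
      c \<noteq> 0 \<and> abs_trace2 ((1 + \<mu> * c^4) / (c^2 * (\<mu> + 1)^2) + \<mu> / (\<mu> + 1)) = 1"
    proof (cases "c = 0")
      case True
      then show ?thesis by simp
    next
      case False
      define p where "p = c^2 + 1"
      define r where "r = c * (\<mu> + 1)"
      have r0: "r \<noteq> 0" using False m1 unfolding r_def by simp
      have sh: "(s + c)^3 + c * (s + c)^2 + (s + c) + \<mu> * c = s^3 + p*s + r" for s
        unfolding p_def r_def by (simp add: algebra_simps power2_eq_square power3_eq_cube)
      have "card {t. t^3 + c * t^2 + t + \<mu> * c = 0} = card {s. (s + c)^3 + c * (s + c)^2 + (s + c) + \<mu> * c = 0}"
        by (rule card_shift)
      also have "\<dots> = card {s. s^3 + p*s + r = 0}" by (simp only: sh)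
      finally have cs: "card {t. t^3 + c * t^2 + t + \<mu> * c = 0} = card {s. s^3 + p*s + r = 0}" .
      have d: "(1 + \<mu> * c^4) / (c^2 * (\<mu> + 1)^2) + \<mu> / (\<mu> + 1) =
        p^3/r^2 + (c^2/(\<mu>+1) + (c^2/(\<mu>+1))^2) + (1/(\<mu>+1) + (1/(\<mu>+1))^2) + 1"
      proof -
        have D: "\<mu> = (\<mu> + 1) + 1" by (simp add: add.assoc)
        obtain D where DD: "\<mu> = D + 1" and D0: "D \<noteq> 0" using D m1 by blast
        show ?thesis
          unfolding p_def r_def DD using False D0
          by (simp add: field_simps power2_eq_square power3_eq_cube power4_eq_xxxx)
      qed
      show ?thesis using count1[OF r0 d] cs False abs_tr by simp
    qed
  qed
qed

end

theorem lemma6p4: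
  fixes \<mu> :: "'a::{finite,field}"
  assumes "even (CARD('a))"
    and "\<mu> \<noteq> 0" and "\<mu> \<noteq> 1"
  shows "N1 \<mu> = card {\<gamma>::'a. \<gamma> \<noteq> 0 \<and>
            abs_trace2 ((\<mu>^3 + \<gamma>^4) / (\<gamma>^2 * (\<mu> + 1)^2) + 1 / (\<mu> + 1)) = 1} \<and>
         N1_tilde \<mu> = card {c::'a. c \<noteq> 0 \<and>
            abs_trace2 ((1 + \<mu> * c^4) / (c^2 * (\<mu> + 1)^2) + \<mu> / (\<mu> + 1)) = 1}"
proof -
  have ch: "(2::'a) = 0" using assms(1) by (rule char2_of_even)
  obtain m where cm: "CARD('a) = 2^m" using pow2_card[OF ch] by blast
  show ?thesis by (rule main_ctx[OF cm ch assms(2,3)])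
qed

end
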